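(* Let $\{a_n\}_{n\ge1}$ be a sequence of nonzero complex numbers and let $w_n(z)$ ($n\ge0$) be the $n$-th approximant of the continued fraction $$\cfrac{a_1}{z-\cfrac{a_2}{1-\cfrac{a_3}{z-\cfrac{a_4}{1-\cdots}}}}$$ (partial denominators alternately $z$ and $1$; $w_0=0$). Then: (1) $w_n(z)$ is a rational function of degree $\lfloor\frac{n+1}{2}\rfloor$; for $n\ge1$, $w_n(z)\sim\frac{a_1}{z}$ and $w_n(z)-w_{n-1}(z)\sim\frac{a_1a_2\cdots a_n}{z^n}$ $(z\to\infty)$; in particular $\{w_n(z)-w_{n-1}(z)\}_{n\ge1}$ is an asymptotic sequence at $\infty$. Moreover $w_{2n}(z)$ coincides with the $n$-th approximant of the continued fraction $$\cfrac{a_1}{z-a_2-\cfrac{a_2a_3}{z-a_3-a_4-\cfrac{a_4a_5}{z-a_5-a_6-\cdots}}}.$$ (2) Let $f(z)$ be a complex-valued function defined on an unbounded subset $\mathfrak X$ of $\mathbb C\cup\{\infty\}$. The following are equivalent: (a) $f(z)\sim \cfrac{a_1}{z-\cfrac{a_2}{1-\cfrac{a_3}{z-\cfrac{a_4}{1-\cdots}}}}$ $(z\to\infty)_{\mathfrak X}$; (b) $f(z)\sim \cfrac{a_1}{z-a_2-\cfrac{a_2a_3}{z-a_3-a_4-\cfrac{a_4a_5}{z-a_5-a_6-\cdots}}}$ $(z\to\infty)_{\mathfrak X}$; (c) $f(z)-w_n(z)\sim\frac{a_1a_2\cdots a_{n+1}}{z^{n+1}}$ $(z\to\infty)_{\mathfrak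 X}$ for all $n\ge0$; (d) $f(z)-w_n(z)=O(z^{-(n+1)})$ $(z\to\infty)_{\mathfrak X}$ for all $n\ge0$; (e) $f(z)-w_n(z)=O(z^{-(n+1)})$ $(z\to\infty)_{\mathfrak X}$ for infinitely many $n\ge0$; (f) for every $n\ge0$, $w_{2n}(z)$ is the unique rational function $w(z)\in\mathbb C(z)$ of degree at most $n$ with $f(z)-w(z)=O(z^{-(2n+1)})$ $(z\to\infty)_{\mathfrak X}$; (g) for every $n\ge1$, $w_{2n}(z)$ is the unique Padé approximant of $f(z)$ over $\mathfrak X$ at $z=\infty$ of order $[n-1,n]$. (3) If the equivalent conditions in (2) hold, then the best rational approximations of $f(z)$ over $\mathfrak X$ are precisely the even-indexed approximants $w_{2n}(z)$, $n\ge0$.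
   Context: Asymptotic relations are as $z\to\infty$ within $\mathfrak X$: $f=O(g)$ if $|f|\le M|g|$ on a punctured neighbourhood of $\infty$ (intersected with $\mathfrak X$) for some $M>0$; $f=o(g)$ if for every $M>0$; $f\sim g$ if $f-g=o(g)$ and $g-f=o(f)$. Asymptotic sequence: $\varphi_{n+1}=o(\varphi_n)$ for all $n$. For a continued fraction $K$ with approximants $v_m$ ($v_0=0$), $f\sim K$ means $\{v_m-v_{m-1}\}_{m\ge1}$ is an asymptotic sequence and $f-v_m=O(v_{m+1}-v_m)$ for all $m\ge0$. Degree of a rational function: max of degrees of numerator and denominator in lowest terms. A best rational approximation of $f$ over $\mathfrak X$ is a $w\in\mathbb C(z)$ that is the unique $v\in\mathbb C(z)$ of degree $\le\deg w$ with $f-v=O(f-w)$ $(z\to\infty)_{\mathfrak X}$. The Padé approximant of $f$ over $\mathfrak X$ at $\infty$ of order $[n-1,n]$ is the unique $g/h$ with $\deg g\le n-1$, $h\ne0$, $\deg h\le n$, and $f-g/h=O(z^{-(2n+1)})$ $(z\to\infty)_{\mathfrak X}$. *)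

theory Defs
  imports "HOL-Computational_Algebra.Computational_Algebra" "HOL-Library.Landau_Symbols"
begin

type_synonym ratfun = "complex poly fract"

definition rz :: ratfun where "rz = to_fract [:0, 1:]"
definition rc :: "complex \<Rightarrow> ratfun" where "rc c = to_fract [:c:]"

definition lowest_terms :: "ratfun \<Rightarrow> complex poly \<Rightarrow> complex poly \<Rightarrow> bool" where
  "lowest_terms r p q \<longleftrightarrow> q \<noteq> 0 \<and> coprime p q \<and> r = to_fract p / to_fract q"

text \<open>Degree of a rational function: max of degrees of numerator and denominator in lowest terms
  (independent of the chosen lowest-terms representation).\<close>
definition rdeg :: "ratfun \<Rightarrow> nat" where
  "rdeg r = (SOME d. \<exists>p q. lowest_terms r p q \<and> d = max (degree p) (degree q))"

text \<open>Evaluation of a rational function at a point via a lowest-terms representation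
  (independent of the choice; poles are sent to 0, irrelevant as z \<rightarrow> \<infinity>).\<close>
definition reval :: "ratfun \<Rightarrow> complex \<Rightarrow> complex" where
  "reval r z = (case (SOME pq. lowest_terms r (fst pq) (snd pq)) of (p, q) \<Rightarrow> poly p z / poly q z)"

fun cf_tail :: "(nat \<Rightarrow> ratfun) \<Rightarrow> (nat \<Rightarrow> ratfun) \<Rightarrow> nat \<Rightarrow> nat \<Rightarrow> ratfun" where
  "cf_tail num den k 0 = 0"
| "cf_tail num den k (Suc m) = num k / (den k - cf_tail num den (Suc k) m)"

definition cf_approx :: "(nat \<Rightarrow> ratfun) \<Rightarrow> (nat \<Rightarrow> ratfun) \<Rightarrow> nat \<Rightarrow> ratfun" where
  "cf_approx num den n = cf_tail num den 1 n"

definition W :: "(nat \<Rightarrow> complex) \<Rightarrow> nat \<Rightarrow> ratfun" where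
  "W a = cf_approx (\<lambda>k. rc (a k)) (\<lambda>k. if odd k then rz else 1)"

text \<open>The continued fraction a1/(z - a2 - a2 a3/(z - a3 - a4 - a4 a5/(z - a5 - a6 - ...))).\<close>
definition J :: "(nat \<Rightarrow> complex) \<Rightarrow> nat \<Rightarrow> ratfun" where
  "J a = cf_approx (\<lambda>k. if k = 1 then rc (a 1) else rc (a (2*k - 2) * a (2*k - 1)))
                   (\<lambda>k. if k = 1 then rz - rc (a 2) else rz - rc (a (2*k - 1)) - rc (a (2*k)))"

definition unbounded_set :: "complex set \<Rightarrow> bool" where
  "unbounded_set X \<longleftrightarrow> (\<forall>R::real. \<exists>z\<in>X. norm z > R)"

definition at_inf_within :: "complex set \<Rightarrow> complex filter" where
  "at_inf_within X = inf at_infinity (principal X)"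

definition asym_equiv :: "complex filter \<Rightarrow> (complex \<Rightarrow> complex) \<Rightarrow> (complex \<Rightarrow> complex) \<Rightarrow> bool" where
  "asym_equiv F f g \<longleftrightarrow> (\<lambda>z. f z - g z) \<in> o[F](g) \<and> (\<lambda>z. g z - f z) \<in> o[F](f)"

definition asym_seq :: "complex filter \<Rightarrow> (nat \<Rightarrow> complex \<Rightarrow> complex) \<Rightarrow> bool" where
  "asym_seq F \<phi> \<longleftrightarrow> (\<forall>n. \<phi> (Suc n) \<in> o[F](\<phi> n))"

text \<open>f ~ K, where v m are the approximants of K (v 0 = 0).\<close>
definition cf_asymp :: "complex filter \<Rightarrow> (complex \<Rightarrow> complex) \<Rightarrow> (nat \<Rightarrow> complex \<Rightarrow> complex) \<Rightarrow> bool" where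
  "cf_asymp F f v \<longleftrightarrow> asym_seq F (\<lambda>m z. v (Suc m) z - v m z)
      \<and> (\<forall>m. (\<lambda>z. f z - v m z) \<in> O[F](\<lambda>z. v (Suc m) z - v m z))"

definition best_rat_approx :: "complex filter \<Rightarrow> (complex \<Rightarrow> complex) \<Rightarrow> ratfun \<Rightarrow> bool" where
  "best_rat_approx F f w \<longleftrightarrow>
     (\<forall>v. (rdeg v \<le> rdeg w \<and> (\<lambda>z. f z - reval v z) \<in> O[F](\<lambda>z. f z - reval w z)) \<longleftrightarrow> v = w)"

definition pade_at_inf :: "complex filter \<Rightarrow> (complex \<Rightarrow> complex) \<Rightarrow> nat \<Rightarrow> ratfun \<Rightarrow> bool" where
  "pade_at_inf F f n r \<longleftrightarrow> (\<exists>g h. degree g \<le> n - 1 \<and> h \<noteq> 0 \<and> degree h \<le> n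
      \<and> r = to_fract g / to_fract h
      \<and> (\<lambda>z. f z - poly g z / poly h z) \<in> O[F](\<lambda>z. inverse (z ^ (2*n+1))))"

end

theory Submission
  imports Defs "HOL-Computational_Algebra.Field_as_Ring"
begin

fun FA :: "(nat \<Rightarrow> 'a::comm_ring_1) \<Rightarrow> (nat \<Rightarrow> 'a) \<Rightarrow> nat \<Rightarrow> nat \<Rightarrow> 'a" where
  "FA b d k 0 = 0"
| "FA b d k (Suc 0) = b k"
| "FA b d k (Suc (Suc n)) = d (k+n+1) * FA b d k (Suc n) - b (k+n+1) * FA b d k n"

fun FB :: "(nat \<Rightarrow> 'a::comm_ring_1) \<Rightarrow> (nat \<Rightarrow> 'a) \<Rightarrow> nat \<Rightarrow> nat \<Rightarrow> 'a" where
  "FB b d k 0 = 1"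
| "FB b d k (Suc 0) = d k"
| "FB b d k (Suc (Suc n)) = d (k+n+1) * FB b d k (Suc n) - b (k+n+1) * FB b d k n"

lemma FAB_back:
  "FA b d k (Suc m) = b k * FB b d (Suc k) m \<and> FB b d k (Suc m) = d k * FB b d (Suc k) m - FA b d (Suc k) m"
proof (induction m arbitrary: k rule: less_induct)
  case (less m)
  show ?case
  proof (cases m)
    case 0 then show ?thesis by simp
  next
    case (Suc m1)
    show ?thesis
    proof (cases m1)
      case 0 then show ?thesis using Suc by (simp add: algebra_simps)
    next
      case (Suc n)
      have IH1: "FA b d k (Suc (Suc n)) = b k * FB b d (Suc k) (Suc n)"
                "FB b d k (Suc (Suc n)) = d k * FB b d (Suc k) (Suc n) - FA b d (Suc k) (Suc n)"
        using less[of "Suc n" k] \<open>m = Suc m1\<close> Suc by auto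
      have IH2: "FA b d k (Suc n) = b k * FB b d (Suc k) n"
                "FB b d k (Suc n) = d k * FB b d (Suc k) n - FA b d (Suc k) n"
        using less[of n k] \<open>m = Suc m1\<close> Suc by auto
      have e1: "FA b d k (Suc (Suc (Suc n))) = d (k+n+2) * FA b d k (Suc (Suc n)) - b (k+n+2) * FA b d k (Suc n)"
        and e2: "FB b d k (Suc (Suc (Suc n))) = d (k+n+2) * FB b d k (Suc (Suc n)) - b (k+n+2) * FB b d k (Suc n)"
        and e3: "FA b d (Suc k) (Suc (Suc n)) = d (k+n+2) * FA b d (Suc k) (Suc n) - b (k+n+2) * FA b d (Suc k) n"
        and e4: "FB b d (Suc k) (Suc (Suc n)) = d (k+n+2) * FB b d (Suc k) (Suc n) - b (k+n+2) * FB b d (Suc k) n"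
        by (simp_all add: numeral_2_eq_2)
      have mm: "m = Suc (Suc n)" using \<open>m = Suc m1\<close> Suc by simp
      show ?thesis 
        unfolding mm e1 e2 e3 e4 IH1 IH2 by (simp add: algebra_simps)
    qed
  qed
qed

lemma FA_back: "FA b d k (Suc m) = b k * FB b d (Suc k) m"
  using FAB_back by blast
lemma FB_back: "FB b d k (Suc m) = d k * FB b d (Suc k) m - FA b d (Suc k) m"
  using FAB_back by blast

lemma FAB_det:
  "FA b d k (Suc n) * FB b d k n - FA b d k n * FB b d k (Suc n) = (\<Prod>i=k..k+n. b i)"
proof (induction n)
  case 0 then show ?case by simp
next
  case (Suc n)
  have "FA b d k (Suc (Suc n)) * FB b d k (Suc n) - FA b d k (Suc n) * FB b d k (Suc (Suc n))
      = b (k+n+1) * (FA b d k (Suc n) * FB b d k n - FA b d k n * FB b d k (Suc n))"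
    by (simp only: FA.simps FB.simps) (simp add: algebra_simps)
  also have "\<dots> = b (k + Suc n) * (\<Prod>i=k..k+n. b i)" using Suc by simp
  also have "\<dots> = (\<Prod>i=k..k+Suc n. b i)"
    by (simp add: prod.nat_ivl_Suc')
  finally show ?case .
qed

lemma FA_to_fract: "to_fract (FA b d k n) = FA (\<lambda>i. to_fract (b i)) (\<lambda>i. to_fract (d i)) k n"
  by (induction b d k n rule: FA.induct) simp_all
lemma FB_to_fract: "to_fract (FB b d k n) = FB (\<lambda>i. to_fract (b i)) (\<lambda>i. to_fract (d i)) k n"
  by (induction b d k n rule: FB.induct) simp_all

lemma div_aux: "(v::'a::field) \<noteq> 0 \<Longrightarrow> x / (y - u / v) = x * v / (y * v - u)"
proof -
  assume v: "v \<noteq> 0"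
  have "y - u / v = (y * v - u) / v" using v by (simp add: field_simps)
  then show ?thesis by simp
qed

lemma cf_tail_FAB:
  fixes b d :: "nat \<Rightarrow> ratfun"
  assumes nz: "\<And>j m. j > kk \<Longrightarrow> FB b d j m \<noteq> 0" and "k \<ge> kk"
  shows "cf_tail b d k m = FA b d k m / FB b d k m"
  using assms(2)
proof (induction m arbitrary: k)
  case 0 then show ?case by simp
next
  case (Suc m)
  have "cf_tail b d k (Suc m) = b k / (d k - FA b d (Suc k) m / FB b d (Suc k) m)"
    using Suc by simp
  also have "\<dots> = b k * FB b d (Suc k) m / (d k * FB b d (Suc k) m - FA b d (Suc k) m)"
    by (rule div_aux) (use nz Suc in auto)
  also have "\<dots> = FA b d k (Suc m) / FB b d k (Suc m)"
    by (simp add: FA_back FB_back)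
  finally show ?case .
qed

lemma monic_sub:
  fixes p q :: "'a::comm_ring_1 poly"
  assumes "lead_coeff p = 1" "degree q < degree p"
  shows "lead_coeff (p - q) = 1 \<and> degree (p - q) = degree p"
proof -
  have "p - q = - q + p" by simp
  moreover have "degree (-q) < degree p" using assms by simp
  ultimately show ?thesis using assms lead_coeff_add_le degree_add_eq_right by metis
qed

definition bW :: "(nat \<Rightarrow> complex) \<Rightarrow> nat \<Rightarrow> complex poly" where "bW a k = [:a k:]"
definition dW :: "nat \<Rightarrow> complex poly" where "dW k = (if odd k then [:0,1:] else 1)"

lemma FB_W_deg:
  "(lead_coeff (FB (bW a) dW k n) = 1 \<and> degree (FB (bW a) dW k n) = (n + (if odd k then 1 else 0)) div 2)
 \<and> (lead_coeff (FB (bW a) dW k (Suc n)) = 1 \<and> degree (FB (bW a) dW k (Suc n)) = (Suc n + (if odd k then 1 else 0)) div 2)"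
proof (induction n)
  case 0 then show ?case by (simp add: dW_def)
next
  case (Suc n)
  define ofs :: nat where "ofs = (if odd k then 1 else 0)"
  define p1 where "p1 = FB (bW a) dW k (Suc n)"
  define p0 where "p0 = FB (bW a) dW k n"
  have h0: "lead_coeff p0 = 1" "degree p0 = (n + ofs) div 2"
   and h1: "lead_coeff p1 = 1" "degree p1 = (Suc n + ofs) div 2"
    unfolding p0_def p1_def ofs_def using Suc.IH by blast+
  define q where "q = [:a (k+n+1):] * p0"
  have rec: "FB (bW a) dW k (Suc (Suc n)) = dW (k+n+1) * p1 - q"
    by (simp add: p0_def p1_def bW_def q_def)
  have dq: "degree q \<le> degree p0"
    using degree_mult_le[of "[:a (k+n+1):]" p0] by (simp add: q_def)
  have goal: "lead_coeff (FB (bW a) dW k (Suc (Suc n))) = 1 \<and>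
        degree (FB (bW a) dW k (Suc (Suc n))) = (Suc (Suc n) + ofs) div 2"
  proof (cases "odd (k+n+1)")
    case True
    then have par: "even (n + ofs)" by (auto simp: ofs_def)
    have p1nz: "p1 \<noteq> 0" using h1 by auto
    have r: "dW (k+n+1) * p1 = pCons 0 p1" using True by (simp add: dW_def)
    have l1: "lead_coeff (pCons 0 p1) = 1" and l2: "degree (pCons 0 p1) = Suc (degree p1)"
      using h1 p1nz by simp_all
    have l3: "degree q < degree (pCons 0 p1)"
    proof -
      have "(n + ofs) div 2 \<le> (Suc n + ofs) div 2" by (simp add: div_le_mono)
      then show ?thesis using dq h0 h1 l2 by linarith
    qed
    have m: "lead_coeff (pCons 0 p1 - q) = 1 \<and> degree (pCons 0 p1 - q) = degree (pCons 0 p1)"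
      by (rule monic_sub[OF l1 l3])
    have "Suc ((Suc n + ofs) div 2) = (Suc (Suc n) + ofs) div 2" using par by presburger
    then have "degree (pCons 0 p1 - q) = (Suc (Suc n) + ofs) div 2"
      using m[THEN conjunct2] l2 h1(2) by linarith
    then show ?thesis unfolding rec r using m[THEN conjunct1] by blast
  next
    case False
    then have par: "odd (n + ofs)" by (auto simp: ofs_def)
    have r: "dW (k+n+1) * p1 = p1" using False by (simp add: dW_def)
    have l3: "degree q < degree p1"
    proof -
      have "(n + ofs) div 2 < (Suc n + ofs) div 2" using par by presburger
      then show ?thesis using dq h0 h1 by linarith
    qed
    have m: "lead_coeff (p1 - q) = 1 \<and> degree (p1 - q) = degree p1"
      by (rule monic_sub[OF h1(1) l3])
    have "(Suc n + ofs) div 2 = (Suc (Suc n) + ofs) div 2" using par by presburger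
    then have "degree (p1 - q) = (Suc (Suc n) + ofs) div 2"
      using m[THEN conjunct2] h1(2) by linarith
    then show ?thesis unfolding rec r using m[THEN conjunct1] by blast
  qed
  show ?case using Suc.IH goal unfolding ofs_def by blast
qed

lemma FB_W_monic: "lead_coeff (FB (bW a) dW k n) = 1"
  using FB_W_deg by blast
lemma FB_W_degree: "degree (FB (bW a) dW k n) = (n + (if odd k then 1 else 0)) div 2"
  using FB_W_deg by blast
lemma FB_W_nz: "FB (bW a) dW k n \<noteq> 0"
  using FB_W_monic[of a k n] by auto

lemma W_eq: "W a n = to_fract (FA (bW a) dW 1 n) / to_fract (FB (bW a) dW 1 n)"
proof -
  have e1: "(\<lambda>k. rc (a k)) = (\<lambda>k. to_fract (bW a k))" by (simp add: rc_def bW_def)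
  have e2: "(\<lambda>k. if odd k then rz else 1) = (\<lambda>k. to_fract (dW k))"
    by (auto simp: rz_def dW_def)
  show ?thesis
    unfolding W_def cf_approx_def e1 e2 FA_to_fract FB_to_fract
    by (rule cf_tail_FAB[where kk=1]) (auto simp: FB_to_fract[symmetric] FB_W_nz)
qed

definition bJ :: "(nat \<Rightarrow> complex) \<Rightarrow> nat \<Rightarrow> complex poly" where
  "bJ a k = (if k = 1 then [:a 1:] else [:a (2*k-2) * a (2*k-1):])"
definition dJ :: "(nat \<Rightarrow> complex) \<Rightarrow> nat \<Rightarrow> complex poly" where
  "dJ a k = (if k = 1 then [:- a 2, 1:] else [:- a (2*k-1) - a (2*k), 1:])"

lemma lin_mult: "lead_coeff ([:c, 1:] * p) = lead_coeff p \<and> (p \<noteq> 0 \<longrightarrow> degree ([:c, 1:] * p) = Suc (degree p))"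
  for p :: "complex poly"
proof -
  have a: "lead_coeff [:c, 1:] = 1" "degree [:c, 1:] = 1" "[:c, 1:] \<noteq> 0" by simp_all
  have "lead_coeff ([:c, 1:] * p) = lead_coeff [:c, 1:] * lead_coeff p" by (rule lead_coeff_mult)
  moreover have "p \<noteq> 0 \<longrightarrow> degree ([:c, 1:] * p) = degree [:c, 1:] + degree p"
    using degree_mult_eq[OF a(3)] by blast
  ultimately show ?thesis using a by simp
qed

lemma FB_J_deg:
  assumes "k \<ge> 2"
  shows "(lead_coeff (FB (bJ a) (dJ a) k n) = 1 \<and> degree (FB (bJ a) (dJ a) k n) = n)
    \<and> (lead_coeff (FB (bJ a) (dJ a) k (Suc n)) = 1 \<and> degree (FB (bJ a) (dJ a) k (Suc n)) = Suc n)"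
proof (induction n)
  case 0 then show ?case using assms by (simp add: dJ_def)
next
  case (Suc n)
  define p1 where "p1 = FB (bJ a) (dJ a) k (Suc n)"
  define p0 where "p0 = FB (bJ a) (dJ a) k n"
  have h0: "lead_coeff p0 = 1" "degree p0 = n"
   and h1: "lead_coeff p1 = 1" "degree p1 = Suc n"
    unfolding p0_def p1_def using Suc.IH by blast+
  define c where "c = - a (2*(k+n+1)-1) - a (2*(k+n+1))"
  define q where "q = bJ a (k+n+1) * p0"
  have dd: "dJ a (k+n+1) = [:c, 1:]" using assms by (simp add: dJ_def c_def)
  have rec: "FB (bJ a) (dJ a) k (Suc (Suc n)) = [:c, 1:] * p1 - q"
    by (simp add: p0_def p1_def q_def dd[symmetric])
  have dq: "degree q \<le> degree p0"
    using degree_mult_le[of "bJ a (k+n+1)" p0] by (simp add: q_def bJ_def)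
  have p1nz: "p1 \<noteq> 0" using h1 by auto
  have l1: "lead_coeff ([:c, 1:] * p1) = 1" and l2: "degree ([:c, 1:] * p1) = Suc (Suc n)"
    using lin_mult[of c p1] h1 p1nz by auto
  have l3: "degree q < degree ([:c, 1:] * p1)" using dq h0 l2 by linarith
  have m: "lead_coeff ([:c, 1:] * p1 - q) = 1 \<and> degree ([:c, 1:] * p1 - q) = degree ([:c, 1:] * p1)"
    by (rule monic_sub[OF l1 l3])
  show ?case using Suc.IH m l2 unfolding rec by auto
qed

lemma FB_J_nz: "k \<ge> 2 \<Longrightarrow> FB (bJ a) (dJ a) k n \<noteq> 0"
  using FB_J_deg[of k a n] by auto

lemma J_eq: "J a n = to_fract (FA (bJ a) (dJ a) 1 n) / to_fract (FB (bJ a) (dJ a) 1 n)"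
proof -
  have e1: "(\<lambda>k. if k = 1 then rc (a 1) else rc (a (2*k - 2) * a (2*k - 1))) = (\<lambda>k. to_fract (bJ a k))"
    by (auto simp: rc_def bJ_def)
  have e2: "(\<lambda>k. if k = 1 then rz - rc (a 2) else rz - rc (a (2*k - 1)) - rc (a (2*k)))
       = (\<lambda>k. to_fract (dJ a k))"
  proof -
    have r1: "rz - rc x = to_fract [:-x, 1:]" for x
      unfolding rz_def rc_def by (simp flip: to_fract_diff)
    have r2: "to_fract [:-x, 1:] - rc y = to_fract [:-x-y, 1:]" for x y
      unfolding rz_def rc_def by (simp flip: to_fract_diff)
    show ?thesis by (rule ext) (simp add: r1 r2 dJ_def)
  qed
  show ?thesis
    unfolding J_def cf_approx_def e1 e2 FA_to_fract FB_to_fract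
    apply (rule cf_tail_FAB[where kk=1])
    subgoal for j m using FB_J_nz[of j a m] by (simp add: FB_to_fract[symmetric])
    by simp
qed

lemma contract_ring:
  fixes Ua Ub Uc Ud Ue :: "'a::comm_ring_1"
  assumes "Ue = Ud - b4*Uc" "Ud = x*Uc - b3*Ub" "Uc = Ub - b2*Ua"
  shows "Ue = (x - b3 - b4)*Uc - (b2*b3)*Ua"
proof -
  have "Ub = Uc + b2*Ua" using assms(3) by simp
  then show ?thesis using assms(1,2) by (simp add: algebra_simps)
qed

lemma W_contract:
  assumes "even m"
  shows "FA (bW a) dW 1 (Suc (Suc (Suc (Suc m)))) = [:- a (Suc (Suc (Suc m))) - a (Suc (Suc (Suc (Suc m)))), 1:] * FA (bW a) dW 1 (Suc (Suc m)) - [:a (Suc (Suc m)) * a (Suc (Suc (Suc m))):] * FA (bW a) dW 1 m"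
    and "FB (bW a) dW 1 (Suc (Suc (Suc (Suc m)))) = [:- a (Suc (Suc (Suc m))) - a (Suc (Suc (Suc (Suc m)))), 1:] * FB (bW a) dW 1 (Suc (Suc m)) - [:a (Suc (Suc m)) * a (Suc (Suc (Suc m))):] * FB (bW a) dW 1 m"
proof -
  have d4: "dW (Suc (Suc (Suc (Suc m)))) = 1" and d3: "dW (Suc (Suc (Suc m))) = [:0,1:]" and d2: "dW (Suc (Suc m)) = 1"
    using assms by (auto simp: dW_def)
  have ix: "1 + Suc (Suc m) + 1 = Suc (Suc (Suc (Suc m)))" "1 + Suc m + 1 = Suc (Suc (Suc m))" "1 + m + 1 = Suc (Suc m)"
    by simp_all
  have pc: "[:- x - y, 1:] = [:0,1:] - [:x:] - [:y:]" for x y :: complex by simp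
  have pm: "[:x * y:] = [:x:] * [:y:]" for x y :: complex by simp
  show "FA (bW a) dW 1 (Suc (Suc (Suc (Suc m)))) = [:- a (Suc (Suc (Suc m))) - a (Suc (Suc (Suc (Suc m)))), 1:] * FA (bW a) dW 1 (Suc (Suc m)) - [:a (Suc (Suc m)) * a (Suc (Suc (Suc m))):] * FA (bW a) dW 1 m"
    unfolding pc pm
    apply (rule contract_ring[where Ud="FA (bW a) dW 1 (Suc (Suc (Suc m)))" and Ub="FA (bW a) dW 1 (Suc m)"])
    apply (simp only: FA.simps(3) ix d4 d3 d2 bW_def mult_1)
    apply (simp only: FA.simps(3) ix d4 d3 d2 bW_def mult_1)
    apply (simp only: FA.simps(3) ix d4 d3 d2 bW_def mult_1)
    done
  show "FB (bW a) dW 1 (Suc (Suc (Suc (Suc m)))) = [:- a (Suc (Suc (Suc m))) - a (Suc (Suc (Suc (Suc m)))), 1:] * FB (bW a) dW 1 (Suc (Suc m)) - [:a (Suc (Suc m)) * a (Suc (Suc (Suc m))):] * FB (bW a) dW 1 m"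
    unfolding pc pm
    apply (rule contract_ring[where Ud="FB (bW a) dW 1 (Suc (Suc (Suc m)))" and Ub="FB (bW a) dW 1 (Suc m)"])
    apply (simp only: FB.simps(3) ix d4 d3 d2 bW_def mult_1)
    apply (simp only: FB.simps(3) ix d4 d3 d2 bW_def mult_1)
    apply (simp only: FB.simps(3) ix d4 d3 d2 bW_def mult_1)
    done
qed

lemma JW_polys:
  "(FA (bJ a) (dJ a) 1 n = FA (bW a) dW 1 (2*n) \<and> FB (bJ a) (dJ a) 1 n = FB (bW a) dW 1 (2*n))
 \<and> (FA (bJ a) (dJ a) 1 (Suc n) = FA (bW a) dW 1 (Suc (Suc (2*n))) \<and> FB (bJ a) (dJ a) 1 (Suc n) = FB (bW a) dW 1 (Suc (Suc (2*n))))"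
proof (induction n)
  case 0 then show ?case by (simp add: bJ_def dJ_def bW_def dW_def numeral_2_eq_2)
next
  case (Suc n)
  have ix: "1 + n + 1 = Suc (Suc n)" "Suc (Suc (Suc (Suc (2*n)))) - 1 = Suc (Suc (Suc (2*n)))"
     "2 * Suc (Suc n) = Suc (Suc (Suc (Suc (2*n))))" "Suc (Suc (Suc (Suc (2*n)))) - 2 = Suc (Suc (2*n))"
     "(Suc (Suc n) = 1) = False"
    by simp_all
  have j1: "FA (bJ a) (dJ a) 1 (Suc (Suc n)) = [:- a (Suc (Suc (Suc (2*n)))) - a (Suc (Suc (Suc (Suc (2*n))))), 1:] * FA (bJ a) (dJ a) 1 (Suc n) - [:a (Suc (Suc (2*n))) * a (Suc (Suc (Suc (2*n)))):] * FA (bJ a) (dJ a) 1 n"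
   and j2: "FB (bJ a) (dJ a) 1 (Suc (Suc n)) = [:- a (Suc (Suc (Suc (2*n)))) - a (Suc (Suc (Suc (Suc (2*n))))), 1:] * FB (bJ a) (dJ a) 1 (Suc n) - [:a (Suc (Suc (2*n))) * a (Suc (Suc (Suc (2*n)))):] * FB (bJ a) (dJ a) 1 n"
    by (simp only: FA.simps(3) FB.simps(3) bJ_def dJ_def ix if_False)+
  have e: "2 * Suc n = Suc (Suc (2*n))" by simp
  have ev: "even (2*n)" by simp
  show ?case
    unfolding e j1 j2 W_contract[OF ev] using Suc.IH by simp
qed

lemma W_J: "W a (2*n) = J a n"
  using JW_polys[of a n] by (simp only: W_eq J_eq)

lemma frac_eq_cross:
  fixes p q p' q' :: "complex poly"
  assumes "q \<noteq> 0" "q' \<noteq> 0"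
  shows "to_fract p / to_fract q = to_fract p' / to_fract q' \<longleftrightarrow> p * q' = p' * q"
proof -
  have "to_fract q \<noteq> 0" "to_fract q' \<noteq> 0" using assms by simp_all
  then have "to_fract p / to_fract q = to_fract p' / to_fract q' \<longleftrightarrow> to_fract p * to_fract q' = to_fract p' * to_fract q"
    by (simp add: divide_eq_eq eq_divide_eq field_simps)
  also have "\<dots> \<longleftrightarrow> p * q' = p' * q" by (simp flip: to_fract_mult)
  finally show ?thesis .
qed

lemma lowest_unique:
  assumes "lowest_terms r p q" "lowest_terms r p' q'"
  shows "\<exists>c. c \<noteq> 0 \<and> p' = smult c p \<and> q' = smult c q"
proof -
  have q: "q \<noteq> 0" "coprime p q" "r = to_fract p / to_fract q"
    and q': "q' \<noteq> 0" "coprime p' q'" "r = to_fract p' / to_fract q'"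
    using assms by (auto simp: lowest_terms_def)
  have eq: "p * q' = p' * q" using q q' frac_eq_cross by metis
  have "q dvd p * q'" unfolding eq by simp
  then have d1: "q dvd q'" using q(2) coprime_dvd_mult_right_iff[of q p q'] coprime_commute by (metis coprime_dvd_mult_left_iff)
  have "q' dvd p' * q" unfolding eq[symmetric] by simp
  moreover have "coprime q' p'" using q'(2) by (simp add: coprime_commute)
  ultimately have d2: "q' dvd q" using coprime_dvd_mult_right_iff[of q' p' q] by simp
  have "normalize q' = normalize q" using associatedI[OF d2 d1] .
  then obtain u where u: "is_unit u" "q' = u * q" by (rule associatedE1)
  then obtain c where c: "u = [:c:]" "c dvd 1" using is_unit_poly_iff by blast
  have cnz: "c \<noteq> 0" using c by auto
  have qq: "q' = smult c q" using u c by simp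
  have "p' * q = smult c p * q" using eq qq by (simp add: mult.commute mult.left_commute)
  then have "p' = smult c p" using q(1) mult_right_cancel by blast
  then show ?thesis using cnz qq by blast
qed

lemma lowest_ex: "\<exists>p q. lowest_terms r p q"
proof -
  let ?p = "fst (quot_of_fract r)" and ?q = "snd (quot_of_fract r)"
  have "?q \<noteq> 0" by simp
  moreover have "coprime ?p ?q" by (rule coprime_quot_of_fract)
  moreover have "r = to_fract ?p / to_fract ?q"
    by (metis Fract_conv_to_fract Fract_quot_of_fract)
  ultimately show ?thesis unfolding lowest_terms_def by blast
qed

lemma rdeg_eq:
  assumes "lowest_terms r p q"
  shows "rdeg r = max (degree p) (degree q)"
proof -
  have ex: "\<exists>d. \<exists>p q. lowest_terms r p q \<and> d = max (degree p) (degree q)" using assms by blast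
  from someI_ex[OF ex] obtain p' q' where pq: "lowest_terms r p' q'"
    "rdeg r = max (degree p') (degree q')" unfolding rdeg_def by blast
  from lowest_unique[OF assms pq(1)] obtain c where "c \<noteq> 0" "p' = smult c p" "q' = smult c q" by blast
  then show ?thesis using pq(2) by simp
qed

lemma reval_eq:
  assumes "lowest_terms r p q"
  shows "reval r z = poly p z / poly q z"
proof -
  have ex: "\<exists>pq. lowest_terms r (fst pq) (snd pq)" using assms by auto
  obtain p' q' where pq: "(SOME pq. lowest_terms r (fst pq) (snd pq)) = (p', q')"
    by (cases "SOME pq. lowest_terms r (fst pq) (snd pq)") auto
  have l: "lowest_terms r p' q'" using someI_ex[OF ex] pq by simp
  from lowest_unique[OF assms l] obtain c where "c \<noteq> 0" "p' = smult c p" "q' = smult c q" by blast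
  then show ?thesis unfolding reval_def pq by simp
qed

lemma reval_frac:
  assumes "q \<noteq> 0" "r = to_fract p / to_fract q" "poly q z \<noteq> 0"
  shows "reval r z = poly p z / poly q z"
proof -
  obtain p0 q0 where l: "lowest_terms r p0 q0" using lowest_ex by blast
  then have q0: "q0 \<noteq> 0" "coprime p0 q0" "r = to_fract p0 / to_fract q0" by (auto simp: lowest_terms_def)
  have eq: "p0 * q = p * q0" using q0(1,3) assms(1,2) frac_eq_cross by metis
  have ev: "poly p0 z * poly q z = poly p z * poly q0 z" using arg_cong[OF eq, of "\<lambda>s. poly s z"] by simp
  have "poly q0 z \<noteq> 0"
  proof
    assume h: "poly q0 z = 0"
    then have "poly p0 z = 0" using ev assms(3) by simp
    then have "[:-z, 1:] dvd p0" "[:-z, 1:] dvd q0" using h by (simp_all add: poly_eq_0_iff_dvd)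
    then have "is_unit [:-z, 1:]" using q0(2) coprime_common_divisor by blast
    then show False by (simp add: is_unit_iff_degree)
  qed
  then show ?thesis using reval_eq[OF l] ev assms(3) by (simp add: field_simps)
qed

lemma const_prod: "(\<Prod>i\<in>A. [:f i:]) = [:\<Prod>i\<in>A. f i:]"
  by (induction A rule: infinite_finite_induct) (simp_all add: mult.commute)

lemma W_lowest:
  assumes a_nz: "\<forall>n\<ge>1. a n \<noteq> 0"
  shows "lowest_terms (W a n) (FA (bW a) dW 1 n) (FB (bW a) dW 1 n)"
proof -
  have cop: "coprime (FA (bW a) dW 1 n) (FB (bW a) dW 1 n)"
  proof (cases n)
    case 0 then show ?thesis by simp
  next
    case (Suc m)
    have det: "FA (bW a) dW 1 (Suc m) * FB (bW a) dW 1 m - FA (bW a) dW 1 m * FB (bW a) dW 1 (Suc m)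
      = [:\<Prod>i=1..1+m. a i:]"
      using FAB_det[of "bW a" dW 1 m] by (simp add: bW_def const_prod)
    have nz: "(\<Prod>i=1..1+m. a i) \<noteq> 0" using a_nz by (auto simp: prod_zero_iff)
    show ?thesis unfolding Suc
    proof (rule coprimeI)
      fix c assume c: "c dvd FA (bW a) dW 1 (Suc m)" "c dvd FB (bW a) dW 1 (Suc m)"
      have "c dvd [:\<Prod>i=1..1+m. a i:]" unfolding det[symmetric] using c
        by (simp add: dvd_diff dvd_mult2 dvd_mult)
      moreover have "is_unit [:\<Prod>i=1..1+m. a i:]" using nz by (simp add: is_unit_iff_degree)
      ultimately show "is_unit c" by (rule dvd_unit_imp_unit)
    qed
  qed
  then show ?thesis unfolding lowest_terms_def using W_eq[of a n] FB_W_nz by blast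
qed

lemma FA_W_deg: "degree (FA (bW a) dW 1 n) \<le> degree (FB (bW a) dW 1 n)"
proof (cases n)
  case 0 then show ?thesis by simp
next
  case (Suc m)
  have "FA (bW a) dW 1 (Suc m) = [:a 1:] * FB (bW a) dW 2 m" using FA_back[of "bW a" dW 1 m] by (simp add: bW_def numeral_2_eq_2)
  then have "degree (FA (bW a) dW 1 (Suc m)) \<le> degree (FB (bW a) dW 2 m)"
    using degree_mult_le[of "[:a 1:]" "FB (bW a) dW 2 m"] by simp
  also have "\<dots> = m div 2" using FB_W_degree[of a 2 m] by simp
  also have "\<dots> \<le> (Suc m + 1) div 2" by simp
  also have "\<dots> = degree (FB (bW a) dW 1 (Suc m))" using FB_W_degree[of a 1 "Suc m"] by simp
  finally show ?thesis using Suc by simp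
qed

lemma rdeg_W:
  assumes a_nz: "\<forall>n\<ge>1. a n \<noteq> 0"
  shows "rdeg (W a n) = (n + 1) div 2"
  using rdeg_eq[OF W_lowest[OF a_nz]] FA_W_deg[of a n] FB_W_degree[of a 1 n] by simp

definition ip :: "nat \<Rightarrow> complex \<Rightarrow> complex" where "ip m = (\<lambda>z. inverse (z ^ m))"

lemma ev_norm_ge: "F \<le> at_infinity \<Longrightarrow> eventually (\<lambda>z::complex. norm z \<ge> b) F"
  by (rule filter_leD, assumption) (auto simp: eventually_at_infinity)

lemma ip_bigo:
  assumes "F \<le> at_infinity" "m \<le> n"
  shows "ip n \<in> O[F](ip m)"
proof (rule bigoI[where c=1])
  show "eventually (\<lambda>z. norm (ip n z) \<le> 1 * norm (ip m z)) F"
    using ev_norm_ge[OF assms(1), of 1]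
  proof eventually_elim
    case (elim z)
    have i1: "norm z ^ m \<le> norm z ^ n" using elim assms(2) by (simp add: power_increasing)
    have "norm z > 0" using elim by linarith
    then have i2: "norm z ^ m > 0" by simp
    have "inverse (norm z ^ n) \<le> inverse (norm z ^ m)" using i1 i2 by (rule le_imp_inverse_le)
    then show ?case by (simp add: ip_def norm_inverse norm_power)
  qed
qed

lemma ip_smallo:
  assumes "F \<le> at_infinity" "m < n"
  shows "ip n \<in> o[F](ip m)"
proof (rule landau_o.smallI)
  fix c :: real assume c: "c > 0"
  show "eventually (\<lambda>z. norm (ip n z) \<le> c * norm (ip m z)) F"
    using ev_norm_ge[OF assms(1), of "max 1 (inverse c)"]
  proof eventually_elim
    case (elim z)
    have z1: "norm z \<ge> 1" and zc: "norm z \<ge> inverse c" using elim by auto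
    have pos: "norm z > 0" using z1 by linarith
    have h4: "norm z ^ Suc m \<le> norm z ^ n" using z1 assms(2) power_increasing[of "Suc m" n "norm z"] by simp
    have h3: "1 \<le> c * norm z" using zc c by (simp add: field_simps)
    have "norm z ^ m = 1 * norm z ^ m" by simp
    also have "\<dots> \<le> (c * norm z) * norm z ^ m" using h3 by (intro mult_right_mono) simp_all
    also have "\<dots> = c * norm z ^ Suc m" by simp
    also have "\<dots> \<le> c * norm z ^ n" using h4 c by (intro mult_left_mono) simp_all
    finally have "norm z ^ m \<le> c * norm z ^ n" .
    then have "inverse (norm z ^ n) \<le> c * inverse (norm z ^ m)" using pos c by (simp add: field_simps)
    then show ?case by (simp add: ip_def norm_inverse norm_power)
  qed
qed

lemma ip_not_bigo:
  assumes "F \<le> at_infinity" "F \<noteq> bot"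
  shows "ip m \<notin> O[F](ip (Suc m))"
proof
  assume "ip m \<in> O[F](ip (Suc m))"
  then obtain c where c: "c > 0" "eventually (\<lambda>z. norm (ip m z) \<le> c * norm (ip (Suc m) z)) F"
    by (elim landau_o.bigE)
  have "eventually (\<lambda>z. False) F"
    using c(2) ev_norm_ge[OF assms(1), of "c + 1"]
  proof eventually_elim
    case (elim z)
    have pos: "norm z > 0" using elim(2) c(1) by (smt (verit) norm_ge_zero)
    have "norm (ip m z) \<le> c * norm (ip (Suc m) z)" using elim(1) .
    then have "inverse (norm z ^ m) \<le> c * inverse (norm z ^ m * norm z)"
      by (simp add: ip_def norm_inverse norm_power norm_mult mult.commute)
    then have "inverse (norm z ^ m) * (norm z ^ m * norm z) \<le> c * inverse (norm z ^ m * norm z) * (norm z ^ m * norm z)"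
      using pos by (intro mult_right_mono) simp_all
    then have "norm z \<le> c" using pos by (simp add: field_simps)
    then show False using elim(2) by simp
  qed
  then show False using assms(2) by (simp add: trivial_limit_def)
qed

lemma poly_asymp:
  fixes p :: "complex poly"
  assumes "p \<noteq> 0"
  shows "(\<lambda>z. poly p z) \<sim>[at_infinity] (\<lambda>z. lead_coeff p * z ^ degree p)"
proof (rule asymp_equivI'_const)
  have ev: "eventually (\<lambda>z::complex. z \<noteq> 0) at_infinity"
    by (auto simp: eventually_at_infinity intro!: exI[of _ 1])
  have "((\<lambda>z. poly (reflect_poly p) (inverse z)) \<longlongrightarrow> poly (reflect_poly p) 0) at_infinity"
    by (intro tendsto_intros tendsto_inverse_0)
  moreover have "poly (reflect_poly p) 0 = lead_coeff p" by (simp add: poly_0_coeff_0)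
  ultimately have "((\<lambda>z. poly (reflect_poly p) (inverse z)) \<longlongrightarrow> lead_coeff p) at_infinity" by simp
  moreover have "eventually (\<lambda>z. poly (reflect_poly p) (inverse z) = poly p z / z ^ degree p) at_infinity"
    using ev
  proof eventually_elim
    case (elim z)
    have "poly (reflect_poly p) (inverse z) = inverse z ^ degree p * poly p z"
      using poly_reflect_poly_nz[of "inverse z" p] elim by simp
    then show ?case by (simp add: divide_inverse power_inverse mult.commute)
  qed
  ultimately show "((\<lambda>z. poly p z / z ^ degree p) \<longlongrightarrow> lead_coeff p) at_infinity"
    by (rule Lim_transform_eventually)
  show "lead_coeff p \<noteq> 0" using assms by simp
qed

lemma poly_ev_nz:
  fixes p :: "complex poly"
  assumes "p \<noteq> 0"
  shows "eventually (\<lambda>z. poly p z \<noteq> 0) at_infinity"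
proof -
  have ev: "eventually (\<lambda>z::complex. z \<noteq> 0) at_infinity"
    by (auto simp: eventually_at_infinity intro!: exI[of _ 1])
  show ?thesis using asymp_equiv_eventually_zeros[OF poly_asymp[OF assms]] ev
    by eventually_elim (use assms in simp)
qed

lemma ratio_asymp:
  fixes p q :: "complex poly"
  assumes "p \<noteq> 0" "q \<noteq> 0"
  shows "(\<lambda>z. poly p z / poly q z) \<sim>[at_infinity]
           (\<lambda>z. (lead_coeff p * z ^ degree p) / (lead_coeff q * z ^ degree q))"
  by (intro asymp_equiv_divide poly_asymp assms)

lemma ratio_lower:
  fixes p q :: "complex poly"
  assumes "p \<noteq> 0" "q \<noteq> 0" "degree q \<le> m + degree p"
  shows "ip m \<in> O[at_infinity](\<lambda>z. poly p z / poly q z)"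
proof -
  let ?g = "\<lambda>z::complex. (lead_coeff p * z ^ degree p) / (lead_coeff q * z ^ degree q)"
  have om: "(\<lambda>z. poly p z / poly q z) \<in> \<Omega>[at_infinity](?g)"
    by (rule asymp_equiv_imp_bigomega[OF ratio_asymp[OF assms(1,2)]])
  have lp: "lead_coeff p \<noteq> 0" "lead_coeff q \<noteq> 0" using assms by auto
  have "ip m \<in> O[at_infinity](?g)"
  proof (rule bigoI[where c="norm (lead_coeff q) / norm (lead_coeff p)"])
    show "eventually (\<lambda>z. norm (ip m z) \<le> norm (lead_coeff q) / norm (lead_coeff p) * norm (?g z)) at_infinity"
      using ev_norm_ge[OF order_refl, of 1]
    proof eventually_elim
      case (elim z)
      have pos: "norm z > 0" using elim by linarith
      have "norm z ^ degree q \<le> norm z ^ (m + degree p)"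
        using elim assms(3) by (simp add: power_increasing)
      then have "norm z ^ degree q \<le> norm z ^ m * norm z ^ degree p" by (simp add: power_add)
      then have "inverse (norm z ^ m) \<le> norm z ^ degree p / norm z ^ degree q"
        using pos by (simp add: field_simps)
      moreover have "norm (lead_coeff q) / norm (lead_coeff p) * norm (?g z) = norm z ^ degree p / norm z ^ degree q"
        using lp pos by (simp add: norm_mult norm_divide norm_power field_simps)
      ultimately show ?case by (simp add: ip_def norm_inverse norm_power)
    qed
  qed
  then show ?thesis using om by (rule bigo_bigomega_trans)
qed

lemma gap:
  fixes s h :: "complex poly"
  assumes "F \<le> at_infinity" "F \<noteq> bot" "h \<noteq> 0" "degree h \<le> m"
    and "(\<lambda>z. poly s z / poly h z) \<in> O[F](ip (Suc m))"
  shows "s = 0"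
proof (rule ccontr)
  assume s: "s \<noteq> 0"
  have "ip m \<in> O[at_infinity](\<lambda>z. poly s z / poly h z)"
    using ratio_lower[OF s assms(3)] assms(4) by simp
  then have "ip m \<in> O[F](\<lambda>z. poly s z / poly h z)"
    by (rule landau_o.big.filter_mono[OF assms(1)])
  then have "ip m \<in> O[F](ip (Suc m))" using assms(5) by (rule landau_o.big_trans)
  then show False using ip_not_bigo[OF assms(1,2)] by blast
qed

lemma gap2:
  fixes p1 q1 p2 q2 :: "complex poly"
  assumes "F \<le> at_infinity" "F \<noteq> bot" "q1 \<noteq> 0" "q2 \<noteq> 0" "degree q1 + degree q2 \<le> m"
    and "(\<lambda>z. poly p1 z / poly q1 z - poly p2 z / poly q2 z) \<in> O[F](ip (Suc m))"
  shows "p1 * q2 = p2 * q1"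
proof -
  have ev: "eventually (\<lambda>z. poly p1 z / poly q1 z - poly p2 z / poly q2 z
      = poly (p1 * q2 - p2 * q1) z / poly (q1 * q2) z) F"
    using filter_leD[OF assms(1) poly_ev_nz[OF assms(3)]] filter_leD[OF assms(1) poly_ev_nz[OF assms(4)]]
    by eventually_elim (simp add: field_simps)
  have "(\<lambda>z. poly (p1 * q2 - p2 * q1) z / poly (q1 * q2) z) \<in> O[F](ip (Suc m))"
    using assms(6) landau_o.big.in_cong[OF ev] by blast
  moreover have "degree (q1 * q2) \<le> m" using assms(3,4,5) by (simp add: degree_mult_eq)
  moreover have "q1 * q2 \<noteq> 0" using assms(3,4) by simp
  ultimately have "p1 * q2 - p2 * q1 = 0" using gap[OF assms(1,2)] by blast
  then show ?thesis by simp
qed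

abbreviation PW where "PW a n \<equiv> FA (bW a) dW 1 n"
abbreviation QW where "QW a n \<equiv> FB (bW a) dW 1 n"

definition eW :: "(nat \<Rightarrow> complex) \<Rightarrow> nat \<Rightarrow> complex \<Rightarrow> complex" where
  "eW a m = (\<lambda>z. reval (W a (Suc m)) z - reval (W a m) z)"

lemma asym_equiv_iff: "asym_equiv F f g \<longleftrightarrow> f \<sim>[F] g"
  unfolding asym_equiv_def using asymp_equiv_altdef asymp_equiv_sym by metis

lemma reval_W:
  assumes "\<forall>n\<ge>1. a n \<noteq> 0"
  shows "reval (W a n) z = poly (PW a n) z / poly (QW a n) z"
  by (rule reval_eq[OF W_lowest[OF assms]])

lemma QW_lead: "lead_coeff (QW a n) = 1" by (rule FB_W_monic)
lemma QW_deg: "degree (QW a n) = (n + 1) div 2" using FB_W_degree[of a 1 n] by simp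

lemma eW_ev:
  assumes a_nz: "\<forall>n\<ge>1. a n \<noteq> 0"
  shows "eventually (\<lambda>z. eW a m z = (\<Prod>i=1..Suc m. a i) / poly (QW a (Suc m) * QW a m) z) at_infinity"
proof -
  obtain c where c: "c = (\<Prod>i=1..Suc m. a i)" by blast
  have det: "PW a (Suc m) * QW a m - PW a m * QW a (Suc m) = [:c:]"
    unfolding c using FAB_det[of "bW a" dW 1 m] by (simp add: bW_def const_prod)
  have dz: "poly (PW a (Suc m)) z * poly (QW a m) z - poly (PW a m) z * poly (QW a (Suc m)) z
     = c" for z
    using arg_cong[OF det, of "\<lambda>s. poly s z"] by simp
  show ?thesis unfolding c[symmetric]
    using poly_ev_nz[OF FB_W_nz[of a 1 m]] poly_ev_nz[OF FB_W_nz[of a 1 "Suc m"]]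
  proof eventually_elim
    case (elim z)
    have "eW a m z = poly (PW a (Suc m)) z / poly (QW a (Suc m)) z - poly (PW a m) z / poly (QW a m) z"
      unfolding eW_def by (simp add: reval_W[OF a_nz])
    also have "\<dots> = (poly (PW a (Suc m)) z * poly (QW a m) z - poly (PW a m) z * poly (QW a (Suc m)) z)
         / (poly (QW a (Suc m)) z * poly (QW a m) z)"
      using elim by (simp add: field_simps)
    also have "\<dots> = c / poly (QW a (Suc m) * QW a m) z" by (simp only: dz poly_mult)
    finally show ?case .
  qed
qed

lemma QQ_asymp: "(\<lambda>z. poly (QW a (Suc m) * QW a m) z) \<sim>[at_infinity] (\<lambda>z. z ^ Suc m)"
proof -
  have nz: "QW a (Suc m) * QW a m \<noteq> 0" using FB_W_nz by simp
  have l: "lead_coeff (QW a (Suc m) * QW a m) = 1"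
    using QW_lead[of a "Suc m"] QW_lead[of a m] by (simp only: lead_coeff_mult) simp
  have "degree (QW a (Suc m) * QW a m) = (Suc m + 1) div 2 + (m + 1) div 2"
    using QW_deg[of a "Suc m"] QW_deg[of a m] FB_W_nz[of a 1 m] FB_W_nz[of a 1 "Suc m"]
    by (simp add: degree_mult_eq)
  also have "\<dots> = Suc m" by presburger
  finally have d: "degree (QW a (Suc m) * QW a m) = Suc m" .
  have "lead_coeff (QW a (Suc m) * QW a m) * z ^ degree (QW a (Suc m) * QW a m) = z ^ Suc m" for z
  proof -
    have l': "coeff (QW a (Suc m) * QW a m) (Suc m) = 1" using l d by simp
    show ?thesis by (simp only: l' d) simp
  qed
  then show ?thesis using poly_asymp[OF nz] by simp
qed

lemma eW_asymp:
  assumes a_nz: "\<forall>n\<ge>1. a n \<noteq> 0"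
  shows "eW a m \<sim>[at_infinity] (\<lambda>z. (\<Prod>i=1..Suc m. a i) / z ^ Suc m)"
proof -
  have "(\<lambda>z. (\<Prod>i=1..Suc m. a i) / poly (QW a (Suc m) * QW a m) z) \<sim>[at_infinity] (\<lambda>z. (\<Prod>i=1..Suc m. a i) / z ^ Suc m)"
    by (intro asymp_equiv_divide asymp_equiv_refl QQ_asymp)
  moreover have "eventually (\<lambda>z. (\<Prod>i=1..Suc m. a i) / poly (QW a (Suc m) * QW a m) z = eW a m z) at_infinity"
    using eW_ev[OF a_nz, of m] by eventually_elim simp
  ultimately show ?thesis
    by (rule asymp_equiv_transfer) simp
qed

lemma asymp_theta:
  fixes g :: "complex \<Rightarrow> complex"
  assumes "g \<sim>[at_infinity] (\<lambda>z. c / z ^ k)" "c \<noteq> 0" "F \<le> at_infinity"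
  shows "g \<in> \<Theta>[F](ip k)"
proof -
  have "g \<in> \<Theta>[at_infinity](\<lambda>z. c / z ^ k)" by (rule asymp_equiv_imp_bigtheta[OF assms(1)])
  moreover have "(\<lambda>z. c / z ^ k) = (\<lambda>z. c * ip k z)" by (simp add: ip_def divide_inverse)
  ultimately have "g \<in> \<Theta>[at_infinity](ip k)" using assms(2) by simp
  then show ?thesis by (rule landau_theta.filter_mono[OF assms(3)])
qed

lemma theta_O:
  assumes "g \<in> \<Theta>[F](h)"
  shows "g \<in> O[F](h)" "h \<in> O[F](g)"
proof -
  show "g \<in> O[F](h)" using assms by (rule bigthetaD1)
  have "h \<in> \<Theta>[F](g)" using assms bigtheta_sym by blast
  then show "h \<in> O[F](g)" by (rule bigthetaD1)
qed

lemma prod_nz: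
  fixes a :: "nat \<Rightarrow> complex"
  assumes a_nz: "\<forall>n\<ge>1. a n \<noteq> 0"
  shows "(\<Prod>i=1..n. a i) \<noteq> 0"
proof -
  have "\<forall>i\<in>{1..n}. a i \<noteq> 0" using a_nz by auto
  then show ?thesis by (simp add: prod_zero_iff)
qed

lemma eW_theta:
  assumes a_nz: "\<forall>n\<ge>1. a n \<noteq> 0" and "F \<le> at_infinity"
  shows "eW a m \<in> \<Theta>[F](ip (Suc m))"
  by (rule asymp_theta[OF eW_asymp[OF a_nz] prod_nz[OF a_nz] assms(2)])

lemma eW_seq:
  assumes a_nz: "\<forall>n\<ge>1. a n \<noteq> 0" and F: "F \<le> at_infinity"
  shows "eW a (Suc m) \<in> o[F](eW a m)"
proof -
  have "eW a (Suc m) \<in> O[F](ip (Suc (Suc m)))" using theta_O(1)[OF eW_theta[OF a_nz F]] .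
  moreover have "ip (Suc (Suc m)) \<in> o[F](ip (Suc m))" by (rule ip_smallo[OF F]) simp
  moreover have "ip (Suc m) \<in> O[F](eW a m)" using theta_O(2)[OF eW_theta[OF a_nz F]] .
  ultimately show ?thesis by (meson landau_o.big_small_trans landau_o.small_big_trans)
qed

lemma W1_asymp:
  assumes a_nz: "\<forall>n\<ge>1. a n \<noteq> 0"
  shows "reval (W a (Suc m)) \<sim>[at_infinity] (\<lambda>z. a 1 / z)"
proof -
  define B where "B = FB (bW a) dW 2 m"
  have PB: "PW a (Suc m) = [:a 1:] * B"
    using FA_back[of "bW a" dW 1 m] by (simp add: bW_def B_def numeral_2_eq_2)
  have Bnz: "B \<noteq> 0" and Bl: "lead_coeff B = 1" and Bd: "degree B = m div 2"
    using FB_W_nz[of a 2 m] FB_W_monic[of a 2 m] FB_W_degree[of a 2 m] by (simp_all add: B_def)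
  have Qd: "degree (QW a (Suc m)) = Suc (m div 2)" using QW_deg[of a "Suc m"] by simp
  have hB: "poly B \<sim>[at_infinity] (\<lambda>z. z ^ (m div 2))"
    using poly_asymp[OF Bnz] Bl Bd by simp
  have hQ: "poly (QW a (Suc m)) \<sim>[at_infinity] (\<lambda>z. z ^ Suc (m div 2))"
    using poly_asymp[OF FB_W_nz[of a 1 "Suc m"]] QW_lead[of a "Suc m"] Qd by simp
  have "(\<lambda>z. a 1 * poly B z / poly (QW a (Suc m)) z) \<sim>[at_infinity]
        (\<lambda>z. a 1 * z ^ (m div 2) / z ^ Suc (m div 2))"
    by (intro asymp_equiv_divide asymp_equiv_mult asymp_equiv_refl hB hQ)
  moreover have "eventually (\<lambda>z. a 1 * poly B z / poly (QW a (Suc m)) z = reval (W a (Suc m)) z) at_infinity"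
    unfolding reval_W[OF a_nz] PB by simp
  moreover have "eventually (\<lambda>z. a 1 * z ^ (m div 2) / z ^ Suc (m div 2) = a 1 / z) at_infinity"
    by (auto simp: eventually_at_infinity intro!: exI[of _ 1])
  ultimately show ?thesis by (rule asymp_equiv_transfer)
qed

definition RW :: "(nat \<Rightarrow> complex) \<Rightarrow> (complex \<Rightarrow> complex) \<Rightarrow> nat \<Rightarrow> complex \<Rightarrow> complex" where
  "RW a f n = (\<lambda>z. f z - reval (W a n) z)"

lemma RW_step: "RW a f n = (\<lambda>z. eW a n z + RW a f (Suc n) z)"
  by (simp add: RW_def eW_def fun_eq_iff)

lemma asymp_equiv_mono: "F \<le> G \<Longrightarrow> f \<sim>[G] g \<Longrightarrow> f \<sim>[F] g"
  unfolding asymp_equiv_def using tendsto_mono by blast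

lemma D_step:
  assumes a_nz: "\<forall>n\<ge>1. a n \<noteq> 0" and F: "F \<le> at_infinity"
  shows "RW a f (n + d) \<in> O[F](ip (Suc (n + d))) \<Longrightarrow> RW a f n \<in> O[F](ip (Suc n))"
proof (induction d arbitrary: n)
  case 0 then show ?case by simp
next
  case (Suc d)
  have "RW a f (Suc n + d) \<in> O[F](ip (Suc (Suc n + d)))" using Suc.prems by simp
  then have "RW a f (Suc n) \<in> O[F](ip (Suc (Suc n)))" by (rule Suc.IH)
  moreover have "ip (Suc (Suc n)) \<in> O[F](ip (Suc n))" by (rule ip_bigo[OF F]) simp
  ultimately have h1: "RW a f (Suc n) \<in> O[F](ip (Suc n))" by (rule landau_o.big_trans)
  have h2: "eW a n \<in> O[F](ip (Suc n))" by (rule theta_O(1)[OF eW_theta[OF a_nz F]])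
  show ?case unfolding RW_step[of a f n] by (rule sum_in_bigo(1)[OF h2 h1])
qed

lemma E_to_D:
  assumes a_nz: "\<forall>n\<ge>1. a n \<noteq> 0" and F: "F \<le> at_infinity"
    and inf: "infinite {n. RW a f n \<in> O[F](ip (Suc n))}"
  shows "RW a f n \<in> O[F](ip (Suc n))"
proof -
  obtain N where N: "N \<ge> n" "RW a f N \<in> O[F](ip (Suc N))"
    using inf unfolding infinite_nat_iff_unbounded_le by blast
  have "RW a f (n + (N - n)) \<in> O[F](ip (Suc (n + (N - n))))" using N by simp
  then show ?thesis by (rule D_step[OF a_nz F])
qed

lemma even_to_D:
  assumes a_nz: "\<forall>n\<ge>1. a n \<noteq> 0" and F: "F \<le> at_infinity"
    and ev: "\<And>n. n \<ge> 1 \<Longrightarrow> RW a f (2*n) \<in> O[F](ip (Suc (2*n)))"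
  shows "RW a f n \<in> O[F](ip (Suc n))"
proof (rule E_to_D[OF a_nz F])
  show "infinite {n. RW a f n \<in> O[F](ip (Suc n))}"
    unfolding infinite_nat_iff_unbounded_le
  proof
    fix m
    have "2 * Suc m \<ge> m" "RW a f (2 * Suc m) \<in> O[F](ip (Suc (2 * Suc m)))" using ev[of "Suc m"] by simp_all
    then show "\<exists>n\<ge>m. n \<in> {n. RW a f n \<in> O[F](ip (Suc n))}" by blast
  qed
qed

lemma eW_fun: "(\<lambda>m z. reval (W a (Suc m)) z - reval (W a m) z) = eW a"
  by (simp add: eW_def fun_eq_iff)

lemma eW_fun1: "(\<lambda>z. reval (W a (Suc m)) z - reval (W a m) z) = eW a m"
  by (simp add: eW_def fun_eq_iff)

lemma RW_fun: "(\<lambda>z. f z - reval (W a n) z) = RW a f n"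
  by (simp add: RW_def)

lemma A_iff_D:
  assumes a_nz: "\<forall>n\<ge>1. a n \<noteq> 0" and F: "F \<le> at_infinity"
  shows "cf_asymp F f (\<lambda>n. reval (W a n)) \<longleftrightarrow> (\<forall>n. RW a f n \<in> O[F](ip (Suc n)))"
proof -
  have s: "asym_seq F (eW a)" unfolding asym_seq_def using eW_seq[OF a_nz F] by blast
  have c: "O[F](eW a m) = O[F](ip (Suc m))" for m
    by (rule landau_o.big.cong_bigtheta[OF eW_theta[OF a_nz F]])
  show ?thesis unfolding cf_asymp_def eW_fun eW_fun1 unfolding RW_fun using s c by simp
qed

lemma C_iff_D:
  assumes a_nz: "\<forall>n\<ge>1. a n \<noteq> 0" and F: "F \<le> at_infinity"
  shows "(\<forall>n. asym_equiv F (\<lambda>z. f z - reval (W a n) z) (\<lambda>z. (\<Prod>k=1..n+1. a k) / z ^ (n + 1)))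
     \<longleftrightarrow> (\<forall>n. RW a f n \<in> O[F](ip (Suc n)))"
proof -
  have th: "(\<lambda>z. (\<Prod>k=1..Suc n. a k) / z ^ Suc n) \<in> \<Theta>[F](ip (Suc n))" for n
    by (rule asymp_theta[OF asymp_equiv_refl prod_nz[OF a_nz] F])
  show ?thesis unfolding RW_fun asym_equiv_iff
  proof (simp only: Suc_eq_plus1[symmetric], intro iffI allI)
    fix n
    assume h: "\<forall>n. RW a f n \<sim>[F] (\<lambda>z. (\<Prod>k=1..Suc n. a k) / z ^ Suc n)"
    have "RW a f n \<in> O[F](\<lambda>z. (\<Prod>k=1..Suc n. a k) / z ^ Suc n)"
      by (rule asymp_equiv_imp_bigo[OF h[rule_format]])
    then show "RW a f n \<in> O[F](ip (Suc n))" using theta_O(1)[OF th] by (rule landau_o.big_trans)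
  next
    fix n
    assume h: "\<forall>n. RW a f n \<in> O[F](ip (Suc n))"
    have "RW a f (Suc n) \<in> O[F](ip (Suc (Suc n)))" using h by blast
    moreover have "ip (Suc (Suc n)) \<in> o[F](ip (Suc n))" by (rule ip_smallo[OF F]) simp
    moreover have "ip (Suc n) \<in> O[F](\<lambda>z. (\<Prod>k=1..Suc n. a k) / z ^ Suc n)" by (rule theta_O(2)[OF th])
    ultimately have o: "RW a f (Suc n) \<in> o[F](\<lambda>z. (\<Prod>k=1..Suc n. a k) / z ^ Suc n)"
      by (meson landau_o.big_small_trans landau_o.small_big_trans)
    have "eW a n \<sim>[F] (\<lambda>z. (\<Prod>k=1..Suc n. a k) / z ^ Suc n)"
      by (rule asymp_equiv_mono[OF F eW_asymp[OF a_nz]])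
    then have "(\<lambda>z. eW a n z + RW a f (Suc n) z) \<sim>[F] (\<lambda>z. (\<Prod>k=1..Suc n. a k) / z ^ Suc n)"
      using asymp_equiv_add_right[OF o] by blast
    then show "RW a f n \<sim>[F] (\<lambda>z. (\<Prod>k=1..Suc n. a k) / z ^ Suc n)"
      unfolding RW_step[of a f n] .
  qed
qed

definition E2 :: "(nat \<Rightarrow> complex) \<Rightarrow> nat \<Rightarrow> complex \<Rightarrow> complex" where
  "E2 a m = (\<lambda>z. reval (W a (2 * Suc m)) z - reval (W a (2 * m)) z)"

lemma E2_eq: "E2 a m = (\<lambda>z. eW a (Suc (2*m)) z + eW a (2*m) z)"
  by (simp add: E2_def eW_def fun_eq_iff)

lemma E2_asymp:
  assumes a_nz: "\<forall>n\<ge>1. a n \<noteq> 0"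
  shows "E2 a m \<sim>[at_infinity] (\<lambda>z. (\<Prod>k=1..Suc (2*m). a k) / z ^ Suc (2*m))"
proof -
  have th: "(\<lambda>z. (\<Prod>k=1..Suc (2*m). a k) / z ^ Suc (2*m)) \<in> \<Theta>[at_infinity](ip (Suc (2*m)))"
    by (rule asymp_theta[OF asymp_equiv_refl prod_nz[OF a_nz] order_refl])
  have "eW a (Suc (2*m)) \<in> O[at_infinity](ip (Suc (Suc (2*m))))"
    by (rule theta_O(1)[OF eW_theta[OF a_nz order_refl]])
  moreover have "ip (Suc (Suc (2*m))) \<in> o[at_infinity](ip (Suc (2*m)))" by (rule ip_smallo[OF order_refl]) simp
  moreover have "ip (Suc (2*m)) \<in> O[at_infinity](\<lambda>z. (\<Prod>k=1..Suc (2*m). a k) / z ^ Suc (2*m))"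
    by (rule theta_O(2)[OF th])
  ultimately have o: "eW a (Suc (2*m)) \<in> o[at_infinity](\<lambda>z. (\<Prod>k=1..Suc (2*m). a k) / z ^ Suc (2*m))"
    by (meson landau_o.big_small_trans landau_o.small_big_trans)
  have "eW a (2*m) \<sim>[at_infinity] (\<lambda>z. (\<Prod>k=1..Suc (2*m). a k) / z ^ Suc (2*m))"
    by (rule eW_asymp[OF a_nz])
  then show ?thesis unfolding E2_eq using asymp_equiv_add_left[OF o] by blast
qed

lemma E2_theta:
  assumes a_nz: "\<forall>n\<ge>1. a n \<noteq> 0" and F: "F \<le> at_infinity"
  shows "E2 a m \<in> \<Theta>[F](ip (Suc (2*m)))"
  by (rule asymp_theta[OF E2_asymp[OF a_nz] prod_nz[OF a_nz] F])

lemma B_iff_D: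
  assumes a_nz: "\<forall>n\<ge>1. a n \<noteq> 0" and F: "F \<le> at_infinity"
  shows "cf_asymp F f (\<lambda>n. reval (J a n)) \<longleftrightarrow> (\<forall>n. RW a f n \<in> O[F](ip (Suc n)))"
proof -
  have s: "asym_seq F (E2 a)" unfolding asym_seq_def
  proof
    fix m
    have "E2 a (Suc m) \<in> O[F](ip (Suc (2 * Suc m)))" by (rule theta_O(1)[OF E2_theta[OF a_nz F]])
    moreover have "ip (Suc (2 * Suc m)) \<in> o[F](ip (Suc (2*m)))" by (rule ip_smallo[OF F]) simp
    moreover have "ip (Suc (2*m)) \<in> O[F](E2 a m)" by (rule theta_O(2)[OF E2_theta[OF a_nz F]])
    ultimately show "E2 a (Suc m) \<in> o[F](E2 a m)"
      by (meson landau_o.big_small_trans landau_o.small_big_trans)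
  qed
  have c: "O[F](E2 a m) = O[F](ip (Suc (2*m)))" for m
    by (rule landau_o.big.cong_bigtheta[OF E2_theta[OF a_nz F]])
  have J: "(\<lambda>n. reval (J a n)) = (\<lambda>n. reval (W a (2*n)))" by (simp add: W_J)
  have f1: "(\<lambda>m z. reval (W a (2 * Suc m)) z - reval (W a (2 * m)) z) = E2 a"
    by (simp add: E2_def fun_eq_iff)
  have f2: "(\<lambda>z. reval (W a (2 * Suc m)) z - reval (W a (2 * m)) z) = E2 a m" for m
    by (simp add: E2_def fun_eq_iff)
  have "cf_asymp F f (\<lambda>n. reval (J a n)) \<longleftrightarrow> (\<forall>m. RW a f (2*m) \<in> O[F](ip (Suc (2*m))))"
    unfolding J cf_asymp_def f1 f2 unfolding RW_fun using s c by simp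
  also have "\<dots> \<longleftrightarrow> (\<forall>n. RW a f n \<in> O[F](ip (Suc n)))"
    using even_to_D[OF a_nz F] by blast
  finally show ?thesis .
qed

lemma PW_deg: "degree (PW a (Suc m)) \<le> m div 2"
proof -
  have "PW a (Suc m) = [:a 1:] * FB (bW a) dW 2 m"
    using FA_back[of "bW a" dW 1 m] by (simp add: bW_def numeral_2_eq_2)
  then have "degree (PW a (Suc m)) \<le> degree (FB (bW a) dW 2 m)"
    using degree_mult_le[of "[:a 1:]" "FB (bW a) dW 2 m"] by simp
  also have "\<dots> = m div 2" using FB_W_degree[of a 2 m] by simp
  finally show ?thesis .
qed

lemma reval_W2:
  assumes a_nz: "\<forall>n\<ge>1. a n \<noteq> 0"
  shows "RW a f n = (\<lambda>z. f z - poly (PW a n) z / poly (QW a n) z)"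
  by (simp add: RW_def reval_W[OF a_nz])

lemma uniq_G:
  assumes a_nz: "\<forall>n\<ge>1. a n \<noteq> 0" and F: "F \<le> at_infinity" "F \<noteq> bot"
    and R: "RW a f (2*n) \<in> O[F](ip (Suc (2*n)))"
    and w: "rdeg w \<le> n" "(\<lambda>z. f z - reval w z) \<in> O[F](ip (Suc (2*n)))"
  shows "w = W a (2*n)"
proof -
  obtain p q where l: "lowest_terms w p q" using lowest_ex by blast
  have dq: "degree q \<le> n" using rdeg_eq[OF l] w(1) by simp
  have qnz: "q \<noteq> 0" using l by (simp add: lowest_terms_def)
  have rw: "reval w z = poly p z / poly q z" for z by (rule reval_eq[OF l])
  have dQ: "degree (QW a (2*n)) = n" using QW_deg[of a "2*n"] by simp
  have "(\<lambda>z. (f z - poly p z / poly q z) - (f z - poly (PW a (2*n)) z / poly (QW a (2*n)) z)) \<in> O[F](ip (Suc (2*n)))"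
    using sum_in_bigo(2)[OF w(2) R] unfolding rw reval_W2[OF a_nz] .
  then have "(\<lambda>z. poly (PW a (2*n)) z / poly (QW a (2*n)) z - poly p z / poly q z) \<in> O[F](ip (Suc (2*n)))"
    by simp
  moreover have dd: "degree (QW a (2*n)) + degree q \<le> 2*n" using dQ dq by simp
  ultimately have "PW a (2*n) * q = p * QW a (2*n)"
    using gap2[OF F FB_W_nz qnz dd] by blast
  then have "to_fract (PW a (2*n)) / to_fract (QW a (2*n)) = to_fract p / to_fract q"
    using frac_eq_cross[OF FB_W_nz qnz] by blast
  then show ?thesis using l W_eq[of a "2*n"] by (simp add: lowest_terms_def)
qed

lemma G_iff_D:
  assumes a_nz: "\<forall>n\<ge>1. a n \<noteq> 0" and F: "F \<le> at_infinity" "F \<noteq> bot"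
  shows "(\<forall>n. rdeg (W a (2 * n)) \<le> n
                  \<and> (\<lambda>z. f z - reval (W a (2 * n)) z) \<in> O[F](ip (2 * n + 1))
                  \<and> (\<forall>w. rdeg w \<le> n \<and> (\<lambda>z. f z - reval w z) \<in> O[F](ip (2 * n + 1))
                         \<longrightarrow> w = W a (2 * n)))
     \<longleftrightarrow> (\<forall>n. RW a f n \<in> O[F](ip (Suc n)))"
proof
  assume h: "\<forall>n. rdeg (W a (2 * n)) \<le> n
                  \<and> (\<lambda>z. f z - reval (W a (2 * n)) z) \<in> O[F](ip (2 * n + 1))
                  \<and> (\<forall>w. rdeg w \<le> n \<and> (\<lambda>z. f z - reval w z) \<in> O[F](ip (2 * n + 1))
                         \<longrightarrow> w = W a (2 * n))"
  show "\<forall>n. RW a f n \<in> O[F](ip (Suc n))"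
  proof
    fix n show "RW a f n \<in> O[F](ip (Suc n))"
      by (rule even_to_D[OF a_nz F(1)]) (use h in \<open>simp add: RW_fun\<close>)
  qed
next
  assume D: "\<forall>n. RW a f n \<in> O[F](ip (Suc n))"
  show "\<forall>n. rdeg (W a (2 * n)) \<le> n
                  \<and> (\<lambda>z. f z - reval (W a (2 * n)) z) \<in> O[F](ip (2 * n + 1))
                  \<and> (\<forall>w. rdeg w \<le> n \<and> (\<lambda>z. f z - reval w z) \<in> O[F](ip (2 * n + 1))
                         \<longrightarrow> w = W a (2 * n))"
  proof (intro allI conjI impI)
    fix n
    show "rdeg (W a (2 * n)) \<le> n" using rdeg_W[OF a_nz, of "2*n"] by simp
    show "(\<lambda>z. f z - reval (W a (2 * n)) z) \<in> O[F](ip (2 * n + 1))"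
      using D[rule_format, of "2*n"] by (simp add: RW_fun)
    fix w assume "rdeg w \<le> n \<and> (\<lambda>z. f z - reval w z) \<in> O[F](ip (2 * n + 1))"
    then show "w = W a (2 * n)"
      using uniq_G[OF a_nz F D[rule_format, of "2*n"]] by simp
  qed
qed

lemma ip_eq: "(\<lambda>z. inverse (z ^ m)) = ip m" by (simp add: ip_def)

lemma pade_W:
  assumes a_nz: "\<forall>n\<ge>1. a n \<noteq> 0" and n: "n \<ge> 1"
    and R: "RW a f (2*n) \<in> O[F](ip (Suc (2*n)))"
  shows "pade_at_inf F f n (W a (2 * n))"
  unfolding pade_at_inf_def ip_eq
proof (intro exI conjI)
  have e: "2*n = Suc (2*n - 1)" using n by simp
  have "degree (PW a (Suc (2*n - 1))) \<le> (2*n - 1) div 2" by (rule PW_deg)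
  moreover have "(2*n - 1) div 2 = n - 1" using n by presburger
  ultimately show "degree (PW a (2*n)) \<le> n - 1" using e by metis
  show "QW a (2*n) \<noteq> 0" by (rule FB_W_nz)
  show "degree (QW a (2*n)) \<le> n" using QW_deg[of a "2*n"] by simp
  show "W a (2 * n) = to_fract (PW a (2*n)) / to_fract (QW a (2*n))" by (rule W_eq)
  show "(\<lambda>z. f z - poly (PW a (2*n)) z / poly (QW a (2*n)) z) \<in> O[F](ip (2 * n + 1))"
    using R unfolding reval_W2[OF a_nz] by simp
qed

lemma pade_uniq:
  assumes a_nz: "\<forall>n\<ge>1. a n \<noteq> 0" and F: "F \<le> at_infinity" "F \<noteq> bot"
    and R: "RW a f (2*n) \<in> O[F](ip (Suc (2*n)))"
    and p: "pade_at_inf F f n r"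
  shows "r = W a (2 * n)"
proof -
  obtain g h where gh: "degree g \<le> n - 1" "h \<noteq> 0" "degree h \<le> n" "r = to_fract g / to_fract h"
     "(\<lambda>z. f z - poly g z / poly h z) \<in> O[F](ip (Suc (2*n)))"
    using p unfolding pade_at_inf_def ip_eq by auto
  have dQ: "degree (QW a (2*n)) = n" using QW_deg[of a "2*n"] by simp
  have "(\<lambda>z. (f z - poly (PW a (2*n)) z / poly (QW a (2*n)) z) - (f z - poly g z / poly h z)) \<in> O[F](ip (Suc (2*n)))"
    using sum_in_bigo(2)[OF R gh(5)] unfolding reval_W2[OF a_nz] .
  then have "(\<lambda>z. poly g z / poly h z - poly (PW a (2*n)) z / poly (QW a (2*n)) z) \<in> O[F](ip (Suc (2*n)))"
    by simp
  moreover have dd: "degree h + degree (QW a (2*n)) \<le> 2*n" using dQ gh(3) by simp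
  ultimately have "g * QW a (2*n) = PW a (2*n) * h"
    using gap2[OF F gh(2) FB_W_nz dd] by blast
  then have "to_fract g / to_fract h = to_fract (PW a (2*n)) / to_fract (QW a (2*n))"
    using frac_eq_cross[OF gh(2) FB_W_nz] by blast
  then show ?thesis using gh(4) W_eq[of a "2*n"] by simp
qed

lemma pade_to_R:
  assumes F: "F \<le> at_infinity" and p: "pade_at_inf F f n (W a (2*n))"
  shows "RW a f (2*n) \<in> O[F](ip (Suc (2*n)))"
proof -
  obtain g h where gh: "h \<noteq> 0" "W a (2*n) = to_fract g / to_fract h"
     "(\<lambda>z. f z - poly g z / poly h z) \<in> O[F](ip (Suc (2*n)))"
    using p unfolding pade_at_inf_def ip_eq by auto
  have ev: "eventually (\<lambda>z. f z - poly g z / poly h z = RW a f (2*n) z) F"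
    using filter_leD[OF F poly_ev_nz[OF gh(1)]]
    by eventually_elim (simp add: RW_def reval_frac[OF gh(1,2)])
  show ?thesis using gh(3) landau_o.big.in_cong[OF ev] by blast
qed

lemma H_iff_D:
  assumes a_nz: "\<forall>n\<ge>1. a n \<noteq> 0" and F: "F \<le> at_infinity" "F \<noteq> bot"
  shows "(\<forall>n\<ge>1. pade_at_inf F f n (W a (2 * n)) \<and> (\<forall>r. pade_at_inf F f n r \<longrightarrow> r = W a (2 * n)))
     \<longleftrightarrow> (\<forall>n. RW a f n \<in> O[F](ip (Suc n)))"
proof
  assume h: "\<forall>n\<ge>1. pade_at_inf F f n (W a (2 * n)) \<and> (\<forall>r. pade_at_inf F f n r \<longrightarrow> r = W a (2 * n))"
  show "\<forall>n. RW a f n \<in> O[F](ip (Suc n))"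
  proof
    fix n show "RW a f n \<in> O[F](ip (Suc n))"
      by (rule even_to_D[OF a_nz F(1)]) (use h pade_to_R[OF F(1)] in blast)
  qed
next
  assume D: "\<forall>n. RW a f n \<in> O[F](ip (Suc n))"
  show "\<forall>n\<ge>1. pade_at_inf F f n (W a (2 * n)) \<and> (\<forall>r. pade_at_inf F f n r \<longrightarrow> r = W a (2 * n))"
    using pade_W[OF a_nz _ D[rule_format]] pade_uniq[OF a_nz F D[rule_format]] by blast
qed

lemma nonbot:
  assumes "unbounded_set X"
  shows "at_inf_within X \<noteq> bot"
proof
  assume "at_inf_within X = bot"
  then have "eventually (\<lambda>z. False) (at_inf_within X)" by simp
  then have "eventually (\<lambda>z. z \<in> X \<longrightarrow> False) at_infinity"
    unfolding at_inf_within_def eventually_inf_principal .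
  then obtain b where b: "\<And>z. b \<le> norm z \<Longrightarrow> z \<notin> X" unfolding eventually_at_infinity by blast
  obtain z where "z \<in> X" "norm z > b" using assms unfolding unbounded_set_def by blast
  then show False using b by force
qed

lemma F_le: "at_inf_within X \<le> at_infinity"
  unfolding at_inf_within_def by simp

lemma best_range:
  assumes a_nz: "\<forall>n\<ge>1. a n \<noteq> 0" and F: "F \<le> at_infinity" "F \<noteq> bot"
    and D: "\<forall>n. RW a f n \<in> O[F](ip (Suc n))"
  shows "{w. best_rat_approx F f w} = range (\<lambda>n. W a (2 * n))"
proof (intro equalityI subsetI)
  fix w assume "w \<in> range (\<lambda>n. W a (2 * n))"
  then obtain n where w: "w = W a (2*n)" by blast
  have rd: "rdeg w = n" using rdeg_W[OF a_nz, of "2*n"] w by simp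
  show "w \<in> {w. best_rat_approx F f w}"
    unfolding mem_Collect_eq best_rat_approx_def
  proof (intro allI iffI)
    fix v assume v: "rdeg v \<le> rdeg w \<and> (\<lambda>z. f z - reval v z) \<in> O[F](\<lambda>z. f z - reval w z)"
    have "(\<lambda>z. f z - reval w z) \<in> O[F](ip (Suc (2*n)))"
      using D[rule_format, of "2*n"] w by (simp add: RW_def)
    then have "(\<lambda>z. f z - reval v z) \<in> O[F](ip (Suc (2*n)))"
      using v landau_o.big_trans by blast
    moreover have "rdeg v \<le> n" using v rd by simp
    ultimately show "v = w" using uniq_G[OF a_nz F D[rule_format, of "2*n"]] w by blast
  next
    fix v assume "v = w"
    then show "rdeg v \<le> rdeg w \<and> (\<lambda>z. f z - reval v z) \<in> O[F](\<lambda>z. f z - reval w z)" by simp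
  qed
next
  fix w assume "w \<in> {w. best_rat_approx F f w}"
  then have best: "\<And>v. (rdeg v \<le> rdeg w \<and> (\<lambda>z. f z - reval v z) \<in> O[F](\<lambda>z. f z - reval w z)) \<longleftrightarrow> v = w"
    unfolding best_rat_approx_def by blast
  define d where "d = rdeg w"
  have "w = W a (2*d)"
  proof (rule ccontr)
    assume ne: "w \<noteq> W a (2*d)"
    obtain p q where l: "lowest_terms w p q" using lowest_ex by blast
    have dq: "degree q \<le> d" using rdeg_eq[OF l] d_def by simp
    have qnz: "q \<noteq> 0" using l by (simp add: lowest_terms_def)
    have rw: "reval w z = poly p z / poly q z" for z by (rule reval_eq[OF l])
    have dQ: "degree (QW a (2*d)) = d" using QW_deg[of a "2*d"] by simp
    define s where "s = PW a (2*d) * q - p * QW a (2*d)"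
    have snz: "s \<noteq> 0"
    proof
      assume "s = 0"
      then have "PW a (2*d) * q = p * QW a (2*d)" by (simp add: s_def)
      then have "to_fract (PW a (2*d)) / to_fract (QW a (2*d)) = to_fract p / to_fract q"
        using frac_eq_cross[OF FB_W_nz qnz] by blast
      then show False using l W_eq[of a "2*d"] ne by (simp add: lowest_terms_def)
    qed
    have Qq: "QW a (2*d) * q \<noteq> 0" using qnz FB_W_nz by simp
    have "degree (QW a (2*d) * q) \<le> 2*d + degree s"
      using dQ dq FB_W_nz qnz by (simp add: degree_mult_eq)
    then have "ip (2*d) \<in> O[at_infinity](\<lambda>z. poly s z / poly (QW a (2*d) * q) z)"
      by (rule ratio_lower[OF snz Qq])
    then have lo: "ip (2*d) \<in> O[F](\<lambda>z. poly s z / poly (QW a (2*d) * q) z)"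
      by (rule landau_o.big.filter_mono[OF F(1)])
    define u where "u = (\<lambda>z. reval (W a (2*d)) z - reval w z)"
    have ev: "eventually (\<lambda>z. poly s z / poly (QW a (2*d) * q) z = u z) F"
      using filter_leD[OF F(1) poly_ev_nz[OF qnz]] filter_leD[OF F(1) poly_ev_nz[OF FB_W_nz[of a 1 "2*d"]]]
      by eventually_elim (simp add: u_def s_def rw reval_W[OF a_nz] field_simps)
    have lo2: "ip (2*d) \<in> O[F](u)" using lo landau_o.big.cong[OF ev] by simp
    have "RW a f (2*d) \<in> O[F](ip (Suc (2*d)))" using D by blast
    moreover have "ip (Suc (2*d)) \<in> o[F](ip (2*d))" by (rule ip_smallo[OF F(1)]) simp
    ultimately have so: "RW a f (2*d) \<in> o[F](u)"
      using lo2 by (meson landau_o.big_small_trans landau_o.small_big_trans)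
    have sum: "(\<lambda>z. f z - reval w z) = (\<lambda>z. RW a f (2*d) z + u z)"
      by (simp add: RW_def u_def fun_eq_iff)
    have "RW a f (2*d) \<in> O[F](u)" using landau_o.small_imp_big[OF so] .
    also have "O[F](u) = O[F](\<lambda>z. RW a f (2*d) z + u z)"
      using landau_o.big.plus_absorb1[OF so] by simp
    finally have "(\<lambda>z. f z - reval (W a (2*d)) z) \<in> O[F](\<lambda>z. f z - reval w z)"
      unfolding sum by (simp add: RW_def)
    moreover have "rdeg (W a (2*d)) \<le> rdeg w" using rdeg_W[OF a_nz, of "2*d"] d_def by simp
    ultimately have "W a (2*d) = w" using best by blast
    then show False using ne by simp
  qed
  then show "w \<in> range (\<lambda>n. W a (2 * n))" by blast
qed

theorem theorem4p2:
  fixes a :: "nat \<Rightarrow> complex" and f :: "complex \<Rightarrow> complex" and X :: "complex set"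
  assumes a_nz: "\<And>n. n \<ge> 1 \<Longrightarrow> a n \<noteq> 0"
  shows
    \<comment> \<open>(1)\<close>
    "(\<forall>n. rdeg (W a n) = (n + 1) div 2)
     \<and> (\<forall>n\<ge>1. asym_equiv at_infinity (reval (W a n)) (\<lambda>z. a 1 / z))
     \<and> (\<forall>n\<ge>1. asym_equiv at_infinity (\<lambda>z. reval (W a n) z - reval (W a (n - 1)) z)
                 (\<lambda>z. (\<Prod>k=1..n. a k) / z ^ n))
     \<and> asym_seq at_infinity (\<lambda>m z. reval (W a (Suc m)) z - reval (W a m) z)
     \<and> (\<forall>n. W a (2 * n) = J a n)
     \<comment> \<open>(2) and (3)\<close>
     \<and> (unbounded_set X \<longrightarrow>
     (let F = at_inf_within X;
          A = cf_asymp F f (\<lambda>n. reval (W a n));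
          B = cf_asymp F f (\<lambda>n. reval (J a n));
          C = (\<forall>n. asym_equiv F (\<lambda>z. f z - reval (W a n) z)
                     (\<lambda>z. (\<Prod>k=1..n+1. a k) / z ^ (n + 1)));
          D = (\<forall>n. (\<lambda>z. f z - reval (W a n) z) \<in> O[F](\<lambda>z. inverse (z ^ (n + 1))));
          E = infinite {n. (\<lambda>z. f z - reval (W a n) z) \<in> O[F](\<lambda>z. inverse (z ^ (n + 1)))};
          G = (\<forall>n. rdeg (W a (2 * n)) \<le> n
                  \<and> (\<lambda>z. f z - reval (W a (2 * n)) z) \<in> O[F](\<lambda>z. inverse (z ^ (2 * n + 1)))
                  \<and> (\<forall>w. rdeg w \<le> n \<and> (\<lambda>z. f z - reval w z) \<in> O[F](\<lambda>z. inverse (z ^ (2 * n + 1)))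
                         \<longrightarrow> w = W a (2 * n)));
          H = (\<forall>n\<ge>1. pade_at_inf F f n (W a (2 * n))
                  \<and> (\<forall>r. pade_at_inf F f n r \<longrightarrow> r = W a (2 * n)))
      in (A \<longleftrightarrow> B) \<and> (A \<longleftrightarrow> C) \<and> (A \<longleftrightarrow> D) \<and> (A \<longleftrightarrow> E) \<and> (A \<longleftrightarrow> G) \<and> (A \<longleftrightarrow> H)
         \<and> (A \<longrightarrow> {w. best_rat_approx F f w} = range (\<lambda>n. W a (2 * n)))))"
proof -
  have a': "\<forall>n\<ge>1. a n \<noteq> 0" using a_nz by blast
  have p1: "\<forall>n. rdeg (W a n) = (n + 1) div 2" using rdeg_W[OF a'] by blast
  have p2: "\<forall>n\<ge>1. asym_equiv at_infinity (reval (W a n)) (\<lambda>z. a 1 / z)"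
  proof (intro allI impI)
    fix n :: nat assume "n \<ge> 1"
    then obtain m where "n = Suc m" by (cases n) auto
    then show "asym_equiv at_infinity (reval (W a n)) (\<lambda>z. a 1 / z)"
      using W1_asymp[OF a'] by (simp add: asym_equiv_iff)
  qed
  have p3: "\<forall>n\<ge>1. asym_equiv at_infinity (\<lambda>z. reval (W a n) z - reval (W a (n - 1)) z)
                 (\<lambda>z. (\<Prod>k=1..n. a k) / z ^ n)"
  proof (intro allI impI)
    fix n :: nat assume "n \<ge> 1"
    then obtain m where m: "n = Suc m" by (cases n) auto
    have "eW a m \<sim>[at_infinity] (\<lambda>z. (\<Prod>i=1..Suc m. a i) / z ^ Suc m)" by (rule eW_asymp[OF a'])
    then show "asym_equiv at_infinity (\<lambda>z. reval (W a n) z - reval (W a (n - 1)) z)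
                 (\<lambda>z. (\<Prod>k=1..n. a k) / z ^ n)"
      unfolding m asym_equiv_iff eW_def by simp
  qed
  have p4: "asym_seq at_infinity (\<lambda>m z. reval (W a (Suc m)) z - reval (W a m) z)"
    unfolding eW_fun asym_seq_def using eW_seq[OF a' order_refl] by blast
  have p5: "\<forall>n. W a (2 * n) = J a n" using W_J by blast
  have p6: "unbounded_set X \<longrightarrow>
     (let F = at_inf_within X;
          A = cf_asymp F f (\<lambda>n. reval (W a n));
          B = cf_asymp F f (\<lambda>n. reval (J a n));
          C = (\<forall>n. asym_equiv F (\<lambda>z. f z - reval (W a n) z)
                     (\<lambda>z. (\<Prod>k=1..n+1. a k) / z ^ (n + 1)));
          D = (\<forall>n. (\<lambda>z. f z - reval (W a n) z) \<in> O[F](\<lambda>z. inverse (z ^ (n + 1))));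
          E = infinite {n. (\<lambda>z. f z - reval (W a n) z) \<in> O[F](\<lambda>z. inverse (z ^ (n + 1)))};
          G = (\<forall>n. rdeg (W a (2 * n)) \<le> n
                  \<and> (\<lambda>z. f z - reval (W a (2 * n)) z) \<in> O[F](\<lambda>z. inverse (z ^ (2 * n + 1)))
                  \<and> (\<forall>w. rdeg w \<le> n \<and> (\<lambda>z. f z - reval w z) \<in> O[F](\<lambda>z. inverse (z ^ (2 * n + 1)))
                         \<longrightarrow> w = W a (2 * n)));
          H = (\<forall>n\<ge>1. pade_at_inf F f n (W a (2 * n))
                  \<and> (\<forall>r. pade_at_inf F f n r \<longrightarrow> r = W a (2 * n)))
      in (A \<longleftrightarrow> B) \<and> (A \<longleftrightarrow> C) \<and> (A \<longleftrightarrow> D) \<and> (A \<longleftrightarrow> E) \<and> (A \<longleftrightarrow> G) \<and> (A \<longleftrightarrow> H)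
         \<and> (A \<longrightarrow> {w. best_rat_approx F f w} = range (\<lambda>n. W a (2 * n))))"
  proof
    assume ub: "unbounded_set X"
    define F where "F = at_inf_within X"
    have F1: "F \<le> at_infinity" unfolding F_def by (rule F_le)
    have F2: "F \<noteq> bot" unfolding F_def by (rule nonbot[OF ub])
    define DD where "DD = (\<forall>n. RW a f n \<in> O[F](ip (Suc n)))"
    have hA: "cf_asymp F f (\<lambda>n. reval (W a n)) \<longleftrightarrow> DD"
      unfolding DD_def by (rule A_iff_D[OF a' F1])
    have hB: "cf_asymp F f (\<lambda>n. reval (J a n)) \<longleftrightarrow> DD"
      unfolding DD_def by (rule B_iff_D[OF a' F1])
    have hC: "(\<forall>n. asym_equiv F (\<lambda>z. f z - reval (W a n) z)
                     (\<lambda>z. (\<Prod>k=1..n+1. a k) / z ^ (n + 1))) \<longleftrightarrow> DD"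
      unfolding DD_def by (rule C_iff_D[OF a' F1])
    have hD: "(\<forall>n. (\<lambda>z. f z - reval (W a n) z) \<in> O[F](\<lambda>z. inverse (z ^ (n + 1)))) \<longleftrightarrow> DD"
      unfolding DD_def ip_eq RW_def by simp
    have hE: "infinite {n. (\<lambda>z. f z - reval (W a n) z) \<in> O[F](\<lambda>z. inverse (z ^ (n + 1)))} \<longleftrightarrow> DD"
    proof -
      have S: "{n. (\<lambda>z. f z - reval (W a n) z) \<in> O[F](\<lambda>z. inverse (z ^ (n + 1)))}
             = {n. RW a f n \<in> O[F](ip (Suc n))}"
        unfolding ip_eq RW_def by simp
      show ?thesis unfolding S DD_def
      proof
        assume "infinite {n. RW a f n \<in> O[F](ip (Suc n))}"
        then show "\<forall>n. RW a f n \<in> O[F](ip (Suc n))" using E_to_D[OF a' F1] by blast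
      next
        assume "\<forall>n. RW a f n \<in> O[F](ip (Suc n))"
        then have "{n. RW a f n \<in> O[F](ip (Suc n))} = UNIV" by blast
        then show "infinite {n. RW a f n \<in> O[F](ip (Suc n))}" by simp
      qed
    qed
    have hG: "(\<forall>n. rdeg (W a (2 * n)) \<le> n
                  \<and> (\<lambda>z. f z - reval (W a (2 * n)) z) \<in> O[F](\<lambda>z. inverse (z ^ (2 * n + 1)))
                  \<and> (\<forall>w. rdeg w \<le> n \<and> (\<lambda>z. f z - reval w z) \<in> O[F](\<lambda>z. inverse (z ^ (2 * n + 1)))
                         \<longrightarrow> w = W a (2 * n))) \<longleftrightarrow> DD"
      unfolding DD_def ip_eq by (rule G_iff_D[OF a' F1 F2])
    have hH: "(\<forall>n\<ge>1. pade_at_inf F f n (W a (2 * n))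
                  \<and> (\<forall>r. pade_at_inf F f n r \<longrightarrow> r = W a (2 * n))) \<longleftrightarrow> DD"
      unfolding DD_def by (rule H_iff_D[OF a' F1 F2])
    have hbest: "DD \<longrightarrow> {w. best_rat_approx F f w} = range (\<lambda>n. W a (2 * n))"
      unfolding DD_def using best_range[OF a' F1 F2] by blast
    show "let F = at_inf_within X;
          A = cf_asymp F f (\<lambda>n. reval (W a n));
          B = cf_asymp F f (\<lambda>n. reval (J a n));
          C = (\<forall>n. asym_equiv F (\<lambda>z. f z - reval (W a n) z)
                     (\<lambda>z. (\<Prod>k=1..n+1. a k) / z ^ (n + 1)));
          D = (\<forall>n. (\<lambda>z. f z - reval (W a n) z) \<in> O[F](\<lambda>z. inverse (z ^ (n + 1))));
          E = infinite {n. (\<lambda>z. f z - reval (W a n) z) \<in> O[F](\<lambda>z. inverse (z ^ (n + 1)))};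
          G = (\<forall>n. rdeg (W a (2 * n)) \<le> n
                  \<and> (\<lambda>z. f z - reval (W a (2 * n)) z) \<in> O[F](\<lambda>z. inverse (z ^ (2 * n + 1)))
                  \<and> (\<forall>w. rdeg w \<le> n \<and> (\<lambda>z. f z - reval w z) \<in> O[F](\<lambda>z. inverse (z ^ (2 * n + 1)))
                         \<longrightarrow> w = W a (2 * n)));
          H = (\<forall>n\<ge>1. pade_at_inf F f n (W a (2 * n))
                  \<and> (\<forall>r. pade_at_inf F f n r \<longrightarrow> r = W a (2 * n)))
      in (A \<longleftrightarrow> B) \<and> (A \<longleftrightarrow> C) \<and> (A \<longleftrightarrow> D) \<and> (A \<longleftrightarrow> E) \<and> (A \<longleftrightarrow> G) \<and> (A \<longleftrightarrow> H)
         \<and> (A \<longrightarrow> {w. best_rat_approx F f w} = range (\<lambda>n. W a (2 * n)))"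
      unfolding Let_def F_def[symmetric] using hA hB hC hD hE hG hH hbest by blast
  qed
  show ?thesis using p1 p2 p3 p4 p5 p6 by blast
qed

end
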